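(* In the 2-sided error regime, there exists an algorithm that, given a moldgraph with $m$ edges, finds a realized spanning tree with high probability using $O(m\log m)$ queries. Moreover, no algorithm can do better than $\Omega(m\log m)$ queries.
   Context: Problem (graph connectivity with noisy queries): a graph $G=(V,E)$, the moldgraph, with $n$ vertices and $m$ edges is given. An adversary selects an arbitrary connected spanning subgraph $G'$ of $G$ to be realized; its edges are called realized. The algorithm does not observe $G'$, but may query an oracle on any edge $e\in E$ (``Is $e$ realized?''), receiving ``Yes'' or ``No''; each query costs $1$, and answers to distinct queries (including repeated queries of the same edge) are independent random. The goal is to output a spanning tree of $G$ all of whose edges are realized, using as few queries as possible. In the 2-sided error regime, each answer is wrong (``No'' for a realized edge, ``Yes'' for a non-realized edge) with a constant probability $p<1/2$. ``With high probability'' means with probability tending to $1$ as $m\to\infty$. The lower bound is a worst-case statement over moldgraphs and realized subgraphs, for algorithms succeeding with constant failure probability. *)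

theory Defs
  imports "HOL-Probability.Probability"
begin

text \<open>Adaptive, possibly randomized query algorithms as finite decision trees.
  Coin q k: internal random coin with bias q (no query cost).\<close>
datatype 'e alg = Output "'e set" | Query 'e "bool \<Rightarrow> 'e alg" | Coin real "bool \<Rightarrow> 'e alg"

primrec depth :: "'e alg \<Rightarrow> nat" where
  "depth (Output T) = 0"
| "depth (Query e k) = Suc (max (depth (k True)) (depth (k False)))"
| "depth (Coin q k) = max (depth (k True)) (depth (k False))"

text \<open>Output distribution in the 2-sided error regime with error probability p,
  realized edge set R: every query (also repeated ones) gets a fresh independent answer,
  which is correct with probability 1 - p.\<close>
primrec run :: "real \<Rightarrow> 'e set \<Rightarrow> 'e alg \<Rightarrow> 'e set pmf" where
  "run p R (Output T) = return_pmf T"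
| "run p R (Query e k) =
     bind_pmf (bernoulli_pmf (if e \<in> R then 1 - p else p)) (\<lambda>b. run p R (k b))"
| "run p R (Coin q k) = bind_pmf (bernoulli_pmf q) (\<lambda>b. run p R (k b))"

definition simple_graph :: "nat set \<Rightarrow> nat set set \<Rightarrow> bool" where
  "simple_graph V E \<longleftrightarrow> finite V \<and> (\<forall>e\<in>E. e \<subseteq> V \<and> card e = 2)"

definition adj :: "nat set set \<Rightarrow> (nat \<times> nat) set" where
  "adj F = {(x, y). {x, y} \<in> F}"

definition connects :: "nat set \<Rightarrow> nat set set \<Rightarrow> bool" where
  "connects V F \<longleftrightarrow> (\<forall>u\<in>V. \<forall>v\<in>V. (u, v) \<in> (adj F)\<^sup>*)"

definition acyclic_edges :: "nat set set \<Rightarrow> bool" where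
  "acyclic_edges F \<longleftrightarrow> (\<forall>e\<in>F. \<forall>u v. e = {u, v} \<longrightarrow> (u, v) \<notin> (adj (F - {e}))\<^sup>*)"

definition spanning_tree :: "nat set \<Rightarrow> nat set set \<Rightarrow> nat set set \<Rightarrow> bool" where
  "spanning_tree V E T \<longleftrightarrow> T \<subseteq> E \<and> connects V T \<and> acyclic_edges T"

definition realizable :: "nat set \<Rightarrow> nat set set \<Rightarrow> nat set set \<Rightarrow> bool" where
  "realizable V E R \<longleftrightarrow> R \<subseteq> E \<and> connects V R"

definition fail_prob :: "real \<Rightarrow> nat set \<Rightarrow> nat set set \<Rightarrow> nat set set \<Rightarrow> nat set alg \<Rightarrow> real" where
  "fail_prob p V E R t =
     measure_pmf.prob (run p R t) {T. \<not> (spanning_tree V E T \<and> T \<subseteq> R)}"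

end

theory Submission
  imports Defs
begin


lemma bind_prob: "measure_pmf.prob (bind_pmf M f) A = measure_pmf.expectation M (\<lambda>x. measure_pmf.prob (f x) A)"
  unfolding measure_pmf_bind
  by (rule measure_pmf.measure_bind[where N="count_space UNIV"])
     (auto simp: space_subprob_algebra intro!: measure_pmf_in_subprob_space prob_space_imp_subprob_space measure_pmf.prob_space_axioms)

lemma bern_prob: "0 \<le> q \<Longrightarrow> q \<le> 1 \<Longrightarrow> measure_pmf.prob (bind_pmf (bernoulli_pmf q) f) A = q * measure_pmf.prob (f True) A + (1-q) * measure_pmf.prob (f False) A"
  by (simp add: bind_prob)

lemma bern_clamp: "bernoulli_pmf c = bernoulli_pmf (max 0 (min 1 c))"
proof (rule pmf_eqI)
  fix b
  show "pmf (bernoulli_pmf c) b = pmf (bernoulli_pmf (max 0 (min 1 c))) b"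
    by (simp add: bernoulli_pmf.rep_eq)
qed

lemma coin_prob: "measure_pmf.prob (bind_pmf (bernoulli_pmf c) f) A =
   (max 0 (min 1 c)) * measure_pmf.prob (f True) A + (1 - max 0 (min 1 c)) * measure_pmf.prob (f False) A"
  by (subst bern_clamp, rule bern_prob) auto

lemma adj_sym: "(x,y) \<in> adj F \<Longrightarrow> (y,x) \<in> adj F"
  by (auto simp: adj_def insert_commute)

lemma rtrancl_adj_sym: "(x,y) \<in> (adj F)\<^sup>* \<Longrightarrow> (y,x) \<in> (adj F)\<^sup>*"
  by (induction rule: rtrancl_induct) (auto intro: converse_rtrancl_into_rtrancl adj_sym)

lemma remove_cycle_edge:
  assumes "e \<in> F" "e = {u,v}" "(u,v) \<in> (adj (F-{e}))\<^sup>*"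
  shows "(adj F)\<^sup>* \<subseteq> (adj (F-{e}))\<^sup>*"
proof (rule rtrancl_subset_rtrancl, safe)
  fix x y assume xy: "(x,y) \<in> adj F"
  show "(x,y) \<in> (adj (F-{e}))\<^sup>*"
  proof (cases "{x,y} = e")
    case True
    then have "(x = u \<and> y = v) \<or> (x = v \<and> y = u)" using assms(2) by (auto simp: doubleton_eq_iff)
    then show ?thesis using assms(3) rtrancl_adj_sym by blast
  next
    case False
    then have "(x,y) \<in> adj (F-{e})" using xy by (auto simp: adj_def)
    then show ?thesis by blast
  qed
qed

lemma exists_spanning_tree:
  assumes "finite R" "connects V R"
  shows "\<exists>T. T \<subseteq> R \<and> connects V T \<and> acyclic_edges T"
proof -
  obtain T where T: "T \<subseteq> R \<and> connects V T" and min: "\<forall>T'. T' \<subseteq> R \<and> connects V T' \<longrightarrow> card T \<le> card T'"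
  proof -
    have "R \<subseteq> R \<and> connects V R" using assms by simp
    from ex_has_least_nat[where P="\<lambda>T. T \<subseteq> R \<and> connects V T", OF this, of card]
    show ?thesis using that by blast
  qed
  have "acyclic_edges T"
    unfolding acyclic_edges_def
  proof (intro ballI allI impI notI)
    fix e u v assume e: "e \<in> T" "e = {u,v}" "(u,v) \<in> (adj (T - {e}))\<^sup>*"
    have "connects V (T - {e})"
      using T remove_cycle_edge[OF e] unfolding connects_def by blast
    moreover have "card (T - {e}) < card T"
      using e(1) T assms(1) by (meson card_Diff1_less finite_subset)
    ultimately have "\<not> card T \<le> card (T - {e})" by simp
    moreover have "T - {e} \<subseteq> R" using T by blast
    ultimately show False using min \<open>connects V (T - {e})\<close> by blast
  qed
  then show ?thesis using T by blast
qed

fun cq :: "'e \<Rightarrow> nat \<Rightarrow> nat \<Rightarrow> (nat \<Rightarrow> 'e alg) \<Rightarrow> 'e alg" where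
  "cq e 0 n f = f n"
| "cq e (Suc k) n f = Query e (\<lambda>b. cq e k (if b then Suc n else n) f)"

lemma depth_cq: "(\<And>j. depth (f j) \<le> D) \<Longrightarrow> depth (cq e k n f) \<le> k + D"
  by (induction k arbitrary: n) (auto simp: max_def)

lemma run_cq:
  assumes "0 \<le> p" "p \<le> 1"
  shows "run p R (cq e k n f) = bind_pmf (binomial_pmf k (if e \<in> R then 1 - p else p)) (\<lambda>j. run p R (f (n + j)))"
proof (induction k arbitrary: n)
  case 0
  then show ?case using assms by (simp add: binomial_pmf_0 bind_return_pmf)
next
  case (Suc k)
  have q: "(if e \<in> R then 1 - p else p) \<in> {0..1}" using assms by auto
  have aux: "\<And>b j. (if b then Suc n else n) + j = n + ((if b then 1 else 0) + j)" by auto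
  show ?case
    by (simp add: Suc binomial_pmf_Suc[OF q] bind_assoc_pmf bind_return_pmf aux)
qed



lemma p_le_s:
  fixes p :: real assumes "0 < p" "p < 1/2"
  shows "p \<le> sqrt (p * (1 - p))"
proof -
  have "p*p \<le> p*(1-p)" using assms by (intro mult_left_mono) auto
  then show ?thesis by (intro real_le_rsqrt) (simp add: power2_eq_square)
qed

lemma term_bound:
  fixes p :: real
  assumes "0 < p" "p < 1/2" "k \<le> 2*a" "a \<le> k"
  shows "p^a * (1-p)^(k-a) \<le> sqrt (p*(1-p))^k"
proof -
  define s where "s = sqrt (p*(1-p))"
  define b where "b = k - a"
  define d where "d = a - b"
  have a: "a = d + b" and k: "k = d + 2*b" using assms unfolding b_def d_def by auto
  have s2: "s^2 = p*(1-p)" unfolding s_def using assms by simp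
  have kb: "k - a = b" unfolding b_def ..
  have "p^a * (1-p)^(k-a) = p^d * (p*(1-p))^b"
    unfolding kb unfolding a by (simp add: power_add power_mult_distrib)
  also have "\<dots> \<le> s^d * (p*(1-p))^b"
    using assms p_le_s[OF assms(1,2)] unfolding s_def
    by (intro mult_right_mono power_mono) auto
  also have "\<dots> = s^k" unfolding k s2[symmetric] by (simp add: power_add power_mult)
  finally show ?thesis unfolding s_def .
qed

lemma sum_choose_s:
  fixes y :: real
  shows "(\<Sum>j\<le>k. real (k choose j) * y^k) = (2*y)^k"
proof -
  have "(\<Sum>j\<le>k. real (k choose j) * y^k) = real (\<Sum>j\<le>k. k choose j) * y^k"
    by (simp add: sum_distrib_right)
  also have "\<dots> = (2*y)^k" by (simp add: choose_row_sum power_mult_distrib)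
  finally show ?thesis .
qed

lemma maj_err1:
  fixes p :: real assumes "0 < p" "p < 1/2"
  shows "(\<Sum>j\<le>k. real (k choose j) * (1-p)^j * (1-(1-p))^(k-j) * (if k < 2*j then 0 else 1)) \<le> (2* sqrt(p*(1-p)))^k"
proof -
  have "(\<Sum>j\<le>k. real (k choose j) * (1-p)^j * (1-(1-p))^(k-j) * (if k < 2*j then 0 else 1))
      \<le> (\<Sum>j\<le>k. real (k choose j) * sqrt(p*(1-p))^k)"
  proof (rule sum_mono)
    fix j assume j: "j \<in> {..k}"
    show "real (k choose j) * (1-p)^j * (1-(1-p))^(k-j) * (if k < 2*j then 0 else 1) \<le> real (k choose j) * sqrt(p*(1-p))^k"
    proof (cases "k < 2*j")
      case False
      have "p^(k-j) * (1-p)^(k-(k-j)) \<le> sqrt (p*(1-p))^k"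
        using False j assms by (intro term_bound) auto
      moreover have "k - (k-j) = j" using j by auto
      ultimately show ?thesis using False
        by (simp add: mult.assoc mult.commute mult_left_mono)
    qed (use assms in auto)
  qed
  also have "\<dots> = (2* sqrt(p*(1-p)))^k" by (rule sum_choose_s)
  finally show ?thesis .
qed

lemma maj_err2:
  fixes p :: real assumes "0 < p" "p < 1/2"
  shows "(\<Sum>j\<le>k. real (k choose j) * p^j * (1-p)^(k-j) * (if k < 2*j then 1 else 0)) \<le> (2* sqrt(p*(1-p)))^k"
proof -
  have "(\<Sum>j\<le>k. real (k choose j) * p^j * (1-p)^(k-j) * (if k < 2*j then 1 else 0))
      \<le> (\<Sum>j\<le>k. real (k choose j) * sqrt(p*(1-p))^k)"
  proof (rule sum_mono)
    fix j assume j: "j \<in> {..k}"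
    show "real (k choose j) * p^j * (1-p)^(k-j) * (if k < 2*j then 1 else 0) \<le> real (k choose j) * sqrt(p*(1-p))^k"
    proof (cases "k < 2*j")
      case True
      have "p^j * (1-p)^(k-j) \<le> sqrt (p*(1-p))^k"
        using True j assms by (intro term_bound) auto
      then show ?thesis using True
        by (simp add: mult.assoc mult_left_mono)
    qed (use assms in auto)
  qed
  also have "\<dots> = (2* sqrt(p*(1-p)))^k" by (rule sum_choose_s)
  finally show ?thesis .
qed

fun alg1 :: "nat \<Rightarrow> nat set list \<Rightarrow> (nat set set \<Rightarrow> nat set alg) \<Rightarrow> nat set set \<Rightarrow> nat set alg" where
  "alg1 k [] out S = out S"
| "alg1 k (e#es) out S = cq e k 0 (\<lambda>j. alg1 k es out (if k < 2*j then insert e S else S))"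

lemma depth_alg1:
  assumes "\<And>S. depth (out S) = 0"
  shows "depth (alg1 k es out S) \<le> length es * k"
proof (induction es arbitrary: S)
  case Nil then show ?case using assms by simp
next
  case (Cons e es)
  have "depth (alg1 k (e#es) out S) \<le> k + length es * k"
    by (simp, rule depth_cq, rule Cons)
  then show ?case by simp
qed

lemma prob_alg1:
  fixes p :: real
  assumes "0 < p" "p < 1/2"
  shows "measure_pmf.prob (run p R (alg1 k es out S)) B \<le>
     real (length es) * (2* sqrt(p*(1-p)))^k + measure_pmf.prob (run p R (out (S \<union> (R \<inter> set es)))) B"
proof (induction es arbitrary: S)
  case Nil then show ?case by simp
next
  case (Cons e es)
  define \<beta> where "\<beta> = (2* sqrt(p*(1-p)))^k"
  define q where "q = (if e \<in> R then 1 - p else p)"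
  define Sj where "Sj = (\<lambda>j::nat. if k < 2*j then insert e S else S)"
  define W where "W = (\<lambda>j::nat. if e \<in> R then \<not> k < 2*j else k < 2*j)"
  define Ps where "Ps = measure_pmf.prob (run p R (out (S \<union> (R \<inter> set (e#es))))) B"
  define L where "L = real (length es) * \<beta>"
  define w where "w = (\<lambda>j. real (k choose j) * q^j * (1-q)^(k-j))"
  have q01: "q \<in> {0..1}" using assms unfolding q_def by auto
  have w0: "\<And>j. 0 \<le> w j" using q01 unfolding w_def by auto
  have wsum: "(\<Sum>j\<le>k. w j) = 1"
    using binomial_ring[of q "1-q" k] unfolding w_def by (simp add: mult.commute mult.left_commute)
  have Wb: "(\<Sum>j\<le>k. w j * (if W j then 1 else 0)) \<le> \<beta>"
  proof (cases "e \<in> R")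
    case True
    then have "\<And>j. (if W j then 1 else 0::real) = (if k < 2*j then 0 else 1)" unfolding W_def by auto
    then show ?thesis using True maj_err1[OF assms, of k] unfolding w_def q_def \<beta>_def
      by simp
  next
    case False
    then have "\<And>j. (if W j then 1 else 0::real) = (if k < 2*j then 1 else 0)" unfolding W_def by auto
    then show ?thesis using False maj_err2[OF assms, of k] unfolding w_def q_def \<beta>_def
      by simp
  qed
  have Pj: "measure_pmf.prob (run p R (alg1 k es out (Sj j))) B \<le> L + Ps + (if W j then 1 else 0)" for j
  proof -
    have "measure_pmf.prob (run p R (alg1 k es out (Sj j))) B \<le> L + measure_pmf.prob (run p R (out (Sj j \<union> (R \<inter> set es)))) B"
      using Cons unfolding L_def \<beta>_def by simp
    moreover have "measure_pmf.prob (run p R (out (Sj j \<union> (R \<inter> set es)))) B \<le> Ps + (if W j then 1 else 0)"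
    proof (cases "W j")
      case True
      have "measure_pmf.prob (run p R (out (Sj j \<union> (R \<inter> set es)))) B \<le> 1" by (rule measure_pmf.prob_le_1)
      moreover have "0 \<le> Ps" unfolding Ps_def by (rule measure_nonneg)
      ultimately have "measure_pmf.prob (run p R (out (Sj j \<union> (R \<inter> set es)))) B \<le> Ps + 1" by linarith
      then show ?thesis using True by simp
    next
      case False
      then have "Sj j \<union> (R \<inter> set es) = S \<union> (R \<inter> set (e#es))"
        unfolding Sj_def W_def by (auto split: if_splits)
      then show ?thesis using False unfolding Ps_def by simp
    qed
    ultimately show ?thesis by linarith
  qed
  have "measure_pmf.prob (run p R (alg1 k (e#es) out S)) B
      = (\<Sum>j\<le>k. w j * measure_pmf.prob (run p R (alg1 k es out (Sj j))) B)"
    using assms q01 unfolding w_def Sj_def q_def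
    by (simp add: run_cq bind_prob expectation_binomial_pmf')
  also have "\<dots> \<le> (\<Sum>j\<le>k. w j * (L + Ps + (if W j then 1 else 0)))"
    by (intro sum_mono mult_left_mono Pj w0)
  also have "\<dots> = (L + Ps) * (\<Sum>j\<le>k. w j) + (\<Sum>j\<le>k. w j * (if W j then 1 else 0))"
    by (simp add: distrib_left sum.distrib sum_distrib_left mult.commute)
  also have "\<dots> \<le> (L + Ps) + \<beta>" using wsum Wb by simp
  finally show ?case unfolding L_def Ps_def \<beta>_def by (simp add: algebra_simps)
qed



definition rho :: "real \<Rightarrow> real" where "rho p = 2 * sqrt (p * (1 - p))"
definition KK :: "real \<Rightarrow> real" where "KK p = - 2 / ln (rho p)"
definition kk :: "real \<Rightarrow> nat \<Rightarrow> nat" where "kk p m = nat \<lceil>KK p * ln (real m)\<rceil>"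
definition outT :: "nat set \<Rightarrow> nat set set \<Rightarrow> nat set set \<Rightarrow> nat set alg" where
  "outT V E S = Output (SOME T. spanning_tree V E T \<and> T \<subseteq> S)"
definition Aup :: "real \<Rightarrow> nat set \<Rightarrow> nat set set \<Rightarrow> nat set alg" where
  "Aup p V E = alg1 (kk p (card E)) (SOME es. set es = E \<and> distinct es) (outT V E) {}"

lemma rho_bounds:
  assumes "0 < p" "p < 1/2"
  shows "0 < rho p" "rho p < 1"
proof -
  show "0 < rho p" using assms unfolding rho_def by simp
  have "p * (1 - p) < 1/4"
  proof -
    have "0 < (1 - 2*p)^2" using assms by simp
    then show ?thesis by (simp add: power2_eq_square algebra_simps)
  qed
  then have "sqrt (p * (1 - p)) < sqrt (1/4)" by (rule real_sqrt_less_mono)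
  moreover have "sqrt (1/4::real) = 1/2" by (simp add: real_sqrt_divide)
  ultimately show "rho p < 1" unfolding rho_def by simp
qed

lemma KK_pos: assumes "0 < p" "p < 1/2" shows "0 < KK p"
  using rho_bounds[OF assms] unfolding KK_def by (simp add: divide_neg_neg)

lemma rho_pow:
  assumes "0 < p" "p < 1/2" "1 \<le> m"
  shows "rho p ^ kk p m \<le> 1 / (real m)^2"
proof -
  have r: "0 < rho p" "rho p < 1" using rho_bounds[OF assms(1,2)] by auto
  have lr: "ln (rho p) < 0" using r by simp
  have lm: "0 \<le> ln (real m)" using assms by simp
  have K: "0 < KK p" by (rule KK_pos[OF assms(1,2)])
  have "KK p * ln (real m) \<le> real (kk p m)" unfolding kk_def by linarith
  then have "real (kk p m) * ln (rho p) \<le> KK p * ln (real m) * ln (rho p)"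
    using lr by (intro mult_right_mono_neg) auto
  also have "\<dots> = - 2 * ln (real m)" unfolding KK_def using lr by simp
  finally have "ln (rho p ^ kk p m) \<le> ln (1 / (real m)^2)"
    using r assms by (simp add: ln_realpow ln_div)
  then show ?thesis using r assms by (subst (asm) ln_le_cancel_iff) auto
qed

lemma upper_part:
  assumes "0 < p" "p < 1/2"
  shows "\<exists>(A :: nat set \<Rightarrow> nat set set \<Rightarrow> nat set alg) (C :: real) (\<delta> :: nat \<Rightarrow> real).
            \<delta> \<longlonglongrightarrow> 0 \<and>
            (\<forall>V E. simple_graph V E \<and> card E \<ge> 2 \<longrightarrow>
               real (depth (A V E)) \<le> C * real (card E) * ln (real (card E))) \<and>
            (\<forall>V E R. simple_graph V E \<and> realizable V E R \<longrightarrow>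
               fail_prob p V E R (A V E) \<le> \<delta> (card E))"
proof (intro exI conjI allI impI)
  define \<delta> where "\<delta> = (\<lambda>m. real m * rho p ^ kk p m)"
  have d_nonneg: "0 \<le> \<delta> m" for m using rho_bounds[OF assms] unfolding \<delta>_def by simp
  have d_le: "\<delta> m \<le> 1 / real m" if "1 \<le> m" for m
  proof -
    have "\<delta> m \<le> real m * (1 / (real m)^2)" unfolding \<delta>_def
      using rho_pow[OF assms that] by (intro mult_left_mono) auto
    also have "\<dots> = 1 / real m" by (simp add: power2_eq_square)
    finally show ?thesis .
  qed
  show "\<delta> \<longlonglongrightarrow> 0"
  proof (rule tendsto_sandwich[of "\<lambda>_. 0" _ _ "\<lambda>m. 1 / real m"])
    show "\<forall>\<^sub>F n in sequentially. 0 \<le> \<delta> n" using d_nonneg by simp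
    show "\<forall>\<^sub>F n in sequentially. \<delta> n \<le> 1 / real n"
      using d_le eventually_sequentially by blast
    show "(\<lambda>m. 1 / real m) \<longlonglongrightarrow> 0" by (rule lim_1_over_n)
  qed simp
  show "real (depth (Aup p V E)) \<le> (KK p + 1 / ln 2) * real (card E) * ln (real (card E))"
    if "simple_graph V E \<and> 2 \<le> card E" for V E
  proof -
    have fin: "finite E" using that unfolding simple_graph_def
      by (meson Pow_iff finite_Pow_iff finite_subset subsetI)
    obtain es where es: "set es = E \<and> distinct es" using finite_distinct_list[OF fin] by blast
    define es' where "es' = (SOME es. set es = E \<and> distinct es)"
    have es': "set es' = E \<and> distinct es'" unfolding es'_def using es by (rule someI)
    have len: "length es' = card E" using es' distinct_card by fastforce
    define m where "m = card E"
    have m2: "2 \<le> m" using that m_def by simp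
    have "depth (Aup p V E) \<le> m * kk p m"
      unfolding Aup_def es'_def[symmetric] m_def[symmetric]
      using depth_alg1[of "outT V E" "kk p m" es' "{}"] len m_def by (simp add: outT_def)
    then have "real (depth (Aup p V E)) \<le> real m * real (kk p m)" by (metis of_nat_le_iff of_nat_mult)
    also have "\<dots> \<le> real m * ((KK p + 1 / ln 2) * ln (real m))"
    proof (intro mult_left_mono)
      have lm: "ln 2 \<le> ln (real m)" using m2 by simp
      have l2: "0 < ln (2::real)" by simp
      have "1 \<le> ln (real m) / ln 2" using lm l2 by simp
      moreover have "real (kk p m) \<le> KK p * ln (real m) + 1"
      proof -
        have "0 \<le> KK p * ln (real m)" using KK_pos[OF assms] m2 by simp
        then show ?thesis unfolding kk_def by linarith
      qed
      moreover have "(KK p + 1 / ln 2) * ln (real m) = KK p * ln (real m) + ln (real m) / ln 2"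
        by (simp add: distrib_right)
      ultimately show "real (kk p m) \<le> (KK p + 1 / ln 2) * ln (real m)"
        by linarith
    qed simp
    finally show ?thesis unfolding m_def by (simp add: mult_ac)
  qed
  show "fail_prob p V E R (Aup p V E) \<le> \<delta> (card E)"
    if "simple_graph V E \<and> realizable V E R" for V E R
  proof -
    have fin: "finite E" using that unfolding simple_graph_def
      by (meson Pow_iff finite_Pow_iff finite_subset subsetI)
    obtain es where es: "set es = E \<and> distinct es" using finite_distinct_list[OF fin] by blast
    define es' where "es' = (SOME es. set es = E \<and> distinct es)"
    have es': "set es' = E \<and> distinct es'" unfolding es'_def using es by (rule someI)
    have len: "length es' = card E" using es' distinct_card by fastforce
    have RE: "R \<subseteq> E" "connects V R" using that unfolding realizable_def by auto
    have finR: "finite R" using RE fin finite_subset by blast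
    obtain T0 where T0: "T0 \<subseteq> R" "connects V T0" "acyclic_edges T0"
      using exists_spanning_tree[OF finR RE(2)] by blast
    have "\<exists>T. spanning_tree V E T \<and> T \<subseteq> R"
      using T0 RE unfolding spanning_tree_def by blast
    then have good: "spanning_tree V E (SOME T. spanning_tree V E T \<and> T \<subseteq> R) \<and> (SOME T. spanning_tree V E T \<and> T \<subseteq> R) \<subseteq> R"
      by (rule someI_ex)
    have eq: "{} \<union> (R \<inter> set es') = R" using es' RE by auto
    have "fail_prob p V E R (Aup p V E) \<le> real (length es') * (2 * sqrt (p * (1 - p))) ^ kk p (card E)
        + measure_pmf.prob (run p R (outT V E ({} \<union> (R \<inter> set es')))) {T. \<not> (spanning_tree V E T \<and> T \<subseteq> R)}"
      unfolding fail_prob_def Aup_def es'_def[symmetric] by (rule prob_alg1[OF assms])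
    also have "\<dots> = \<delta> (card E)"
      unfolding eq using good by (simp add: outT_def len \<delta>_def rho_def)
    finally show ?thesis .
  qed
qed



definition ta :: "nat \<Rightarrow> nat set" where "ta i = {0, 2*i+1}"
definition tb :: "nat \<Rightarrow> nat set" where "tb i = {0, 2*i+2}"
definition tc :: "nat \<Rightarrow> nat set" where "tc i = {2*i+1, 2*i+2}"
definition pe :: "nat \<Rightarrow> nat \<Rightarrow> nat set" where "pe k j = {0, 2*k+1+j}"
definition LE :: "nat \<Rightarrow> nat \<Rightarrow> nat set set" where
  "LE k r = ta ` {..<k} \<union> tb ` {..<k} \<union> tc ` {..<k} \<union> pe k ` {..<r}"
definition LV :: "nat \<Rightarrow> nat \<Rightarrow> nat set" where "LV k r = {..2*k+r}"
definition LR :: "nat \<Rightarrow> nat \<Rightarrow> nat set \<Rightarrow> nat set set" where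
  "LR k r x = LE k r - ta ` ({..<k} - x) - tb ` x"
definition dec :: "nat \<Rightarrow> nat set set \<Rightarrow> nat set" where "dec k T = {i. i < k \<and> ta i \<in> T}"
definition flip :: "nat \<Rightarrow> nat set \<Rightarrow> nat set" where "flip i x = (if i \<in> x then x - {i} else insert i x)"
definition J :: "nat set \<Rightarrow> nat" where "J e = (Max e - 1) div 2"

lemma par_ne[simp]: "(2*j::nat) \<noteq> Suc (2*i)" "Suc (2*i) \<noteq> 2*j" by presburger+

lemma ta_eq[simp]: "ta i = ta j \<longleftrightarrow> i = j" by (auto simp: ta_def doubleton_eq_iff)
lemma tb_eq[simp]: "tb i = tb j \<longleftrightarrow> i = j" by (auto simp: tb_def doubleton_eq_iff)
lemma tc_eq[simp]: "tc i = tc j \<longleftrightarrow> i = j" by (auto simp: tc_def doubleton_eq_iff)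
lemma pe_eq[simp]: "pe k i = pe k j \<longleftrightarrow> i = j" by (auto simp: pe_def doubleton_eq_iff)
lemma ta_tb[simp]: "ta i \<noteq> tb j" "tb j \<noteq> ta i" by (auto simp: ta_def tb_def doubleton_eq_iff; presburger)+
lemma ta_tc[simp]: "ta i \<noteq> tc j" "tc j \<noteq> ta i" by (auto simp: ta_def tc_def doubleton_eq_iff)
lemma tb_tc[simp]: "tb i \<noteq> tc j" "tc j \<noteq> tb i" by (auto simp: tb_def tc_def doubleton_eq_iff)
lemma ta_pe[simp]: "i < k \<Longrightarrow> ta i \<noteq> pe k j" "i < k \<Longrightarrow> pe k j \<noteq> ta i" by (auto simp: ta_def pe_def doubleton_eq_iff)
lemma tb_pe[simp]: "i < k \<Longrightarrow> tb i \<noteq> pe k j" "i < k \<Longrightarrow> pe k j \<noteq> tb i" by (auto simp: tb_def pe_def doubleton_eq_iff)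
lemma tc_pe[simp]: "tc i \<noteq> pe k j" "pe k j \<noteq> tc i" by (auto simp: tc_def pe_def doubleton_eq_iff)
lemma J_ta[simp]: "J (ta i) = i" by (simp add: J_def ta_def)
lemma J_tb[simp]: "J (tb i) = i" by (simp add: J_def tb_def)

lemma card_LE: "card (LE k r) = 3*k + r"
proof -
  have c1: "card (ta ` {..<k}) = k" by (simp add: card_image inj_on_def)
  have c2: "card (tb ` {..<k}) = k" by (simp add: card_image inj_on_def)
  have c3: "card (tc ` {..<k}) = k" by (simp add: card_image inj_on_def)
  have c4: "card (pe k ` {..<r}) = r" by (simp add: card_image inj_on_def)
  have "card (ta ` {..<k} \<union> tb ` {..<k}) = 2*k" using c1 c2 by (subst card_Un_disjoint) auto
  moreover have "card (ta ` {..<k} \<union> tb ` {..<k} \<union> tc ` {..<k}) = card (ta ` {..<k} \<union> tb ` {..<k}) + k"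
    using c3 by (subst card_Un_disjoint) auto
  moreover have "card (ta ` {..<k} \<union> tb ` {..<k} \<union> tc ` {..<k} \<union> pe k ` {..<r})
     = card (ta ` {..<k} \<union> tb ` {..<k} \<union> tc ` {..<k}) + r"
    using c4 by (subst card_Un_disjoint) auto
  ultimately show ?thesis unfolding LE_def by simp
qed

lemma simple_LE: "simple_graph (LV k r) (LE k r)"
  unfolding simple_graph_def LV_def LE_def
  by (auto simp: ta_def tb_def tc_def pe_def)

lemma mem_LR: "e \<in> LR k r x \<longleftrightarrow> e \<in> LE k r \<and> e \<notin> ta ` ({..<k} - x) \<and> e \<notin> tb ` x"
  unfolding LR_def by auto

lemma ta_LR: "x \<subseteq> {..<k} \<Longrightarrow> i < k \<Longrightarrow> ta i \<in> LR k r x \<longleftrightarrow> i \<in> x"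
  unfolding mem_LR LE_def by auto
lemma tb_LR: "x \<subseteq> {..<k} \<Longrightarrow> i < k \<Longrightarrow> tb i \<in> LR k r x \<longleftrightarrow> i \<notin> x"
  unfolding mem_LR LE_def by auto
lemma tc_LR: "x \<subseteq> {..<k} \<Longrightarrow> i < k \<Longrightarrow> tc i \<in> LR k r x"
  unfolding mem_LR LE_def by auto
lemma pe_LR: "x \<subseteq> {..<k} \<Longrightarrow> j < r \<Longrightarrow> pe k j \<in> LR k r x"
  unfolding mem_LR LE_def by auto

lemma edge_step: "{a,b} \<in> F \<Longrightarrow> (a,b) \<in> (adj F)\<^sup>*"
  by (auto simp: adj_def)

lemma reach0:
  assumes x: "x \<subseteq> {..<k}" and v: "v \<in> LV k r"
  shows "(v, 0) \<in> (adj (LR k r x))\<^sup>*"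
proof -
  consider "v = 0" | i where "i < k" "v = 2*i+1" | i where "i < k" "v = 2*i+2" | j where "j < r" "v = 2*k+1+j"
  proof -
    consider "v = 0" | "0 < v" "v \<le> 2*k" | "2*k < v" by linarith
    then show ?thesis
    proof cases
      case 2
      define i where "i = (v-1) div 2"
      have d: "v - 1 = 2 * i + (v-1) mod 2" unfolding i_def by simp
      have "(v-1) mod 2 < 2" by simp
      then have "v = 2*i+1 \<or> v = 2*i+2" using d 2 by linarith
      moreover have "i < k" using d 2 by linarith
      ultimately show ?thesis using that(2)[of i] that(3)[of i] by blast
    next
      case 3
      then show ?thesis using that(4)[of "v - 2*k - 1"] v unfolding LV_def by auto
    qed (use that in auto)
  qed
  then show ?thesis
  proof cases
    case 1 then show ?thesis by simp
  next
    case (2 i)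
    show ?thesis
    proof (cases "i \<in> x")
      case True
      then have "ta i \<in> LR k r x" using ta_LR x 2 by blast
      then show ?thesis using 2 by (intro edge_step) (simp add: ta_def insert_commute)
    next
      case False
      then have "tb i \<in> LR k r x" "tc i \<in> LR k r x" using tb_LR tc_LR x 2 by blast+
      then have "(2*i+1, 2*i+2) \<in> (adj (LR k r x))\<^sup>*" "(2*i+2, 0) \<in> (adj (LR k r x))\<^sup>*"
        by (auto intro!: edge_step simp: tb_def tc_def insert_commute)
      then show ?thesis using 2 by simp
    qed
  next
    case (3 i)
    show ?thesis
    proof (cases "i \<in> x")
      case False
      then have "tb i \<in> LR k r x" using tb_LR x 3 by blast
      then show ?thesis using 3 by (intro edge_step) (simp add: tb_def insert_commute)
    next
      case True
      then have "ta i \<in> LR k r x" "tc i \<in> LR k r x" using ta_LR tc_LR x 3 by blast+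
      then have "(2*i+2, 2*i+1) \<in> (adj (LR k r x))\<^sup>*" "(2*i+1, 0) \<in> (adj (LR k r x))\<^sup>*"
        by (auto intro!: edge_step simp: ta_def tc_def insert_commute)
      then show ?thesis using 3 by simp
    qed
  next
    case (4 j)
    then have "pe k j \<in> LR k r x" using pe_LR x by blast
    then show ?thesis using 4 by (intro edge_step) (simp add: pe_def insert_commute)
  qed
qed

lemma realizable_LR:
  assumes "x \<subseteq> {..<k}"
  shows "realizable (LV k r) (LE k r) (LR k r x)"
  unfolding realizable_def connects_def
proof (intro conjI ballI)
  show "LR k r x \<subseteq> LE k r" unfolding LR_def by blast
  fix u v assume "u \<in> LV k r" "v \<in> LV k r"
  then have "(u,0) \<in> (adj (LR k r x))\<^sup>*" "(v,0) \<in> (adj (LR k r x))\<^sup>*" using reach0 assms by blast+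
  then show "(u,v) \<in> (adj (LR k r x))\<^sup>*" using rtrancl_adj_sym by (meson rtrancl_trans)
qed

lemma closed_reach:
  assumes "\<And>y z. (y,z) \<in> adj F \<Longrightarrow> y \<in> X \<Longrightarrow> z \<in> X" "(u,v) \<in> (adj F)\<^sup>*" "u \<in> X"
  shows "v \<in> X"
  using assms(2,3) by (induction rule: rtrancl_induct) (auto intro: assms(1))

lemma success_dec:
  assumes x: "x \<subseteq> {..<k}" and st: "spanning_tree (LV k r) (LE k r) T" and TR: "T \<subseteq> LR k r x"
  shows "dec k T = x"
proof -
  have "i \<in> x \<longleftrightarrow> ta i \<in> T" if i: "i < k" for i
  proof
    assume "ta i \<in> T" then show "i \<in> x" using TR ta_LR[OF x i] by blast
  next
    assume ix: "i \<in> x"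
    show "ta i \<in> T"
    proof (rule ccontr)
      assume na: "ta i \<notin> T"
      have nb: "tb i \<notin> T" using TR tb_LR[OF x i] ix by blast
      define X where "X = {2*i+1, 2*i+2}"
      have cl: "z \<in> X" if "(y,z) \<in> adj T" "y \<in> X" for y z
      proof -
        have yz: "{y,z} \<in> LE k r" using that st unfolding adj_def spanning_tree_def by auto
        have "{y,z} \<in> T" using that unfolding adj_def by auto
        then have n1: "{y,z} \<noteq> ta i" "{y,z} \<noteq> tb i" using na nb by auto
        from yz show "z \<in> X" unfolding LE_def
        proof (elim UnE imageE)
          fix j assume "j \<in> {..<k}" "{y,z} = ta j"
          then show "z \<in> X" using n1 \<open>y \<in> X\<close> unfolding X_def ta_def by (auto simp: doubleton_eq_iff)
        next
          fix j assume "j \<in> {..<k}" "{y,z} = tb j"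
          then show "z \<in> X" using n1 \<open>y \<in> X\<close> unfolding X_def tb_def by (auto simp: doubleton_eq_iff)
        next
          fix j assume "j \<in> {..<k}" "{y,z} = tc j"
          then show "z \<in> X" using \<open>y \<in> X\<close> unfolding X_def tc_def by (auto simp: doubleton_eq_iff)
        next
          fix j assume "j \<in> {..<r}" "{y,z} = pe k j"
          then show "z \<in> X" using \<open>y \<in> X\<close> i unfolding X_def pe_def by (auto simp: doubleton_eq_iff)
        qed
      qed
      have "(2*i+1, 0) \<in> (adj T)\<^sup>*" using st i unfolding spanning_tree_def connects_def LV_def by auto
      moreover have "2*i+1 \<in> X" by (simp add: X_def)
      ultimately have "0 \<in> X" using closed_reach[where F=T and X=X] cl by metis
      then show False unfolding X_def by auto
    qed
  qed
  then show ?thesis using x unfolding dec_def by auto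
qed

lemma flip_LR:
  assumes "x \<subseteq> {..<k}" "i \<noteq> J e"
  shows "e \<in> LR k r (flip i x) \<longleftrightarrow> e \<in> LR k r x"
proof -
  have "e \<noteq> ta i" "e \<noteq> tb i" using assms(2) by auto
  then show ?thesis unfolding mem_LR flip_def by auto
qed

lemma flip_in: "x \<subseteq> {..<k} \<Longrightarrow> i < k \<Longrightarrow> flip i x \<subseteq> {..<k}"
  unfolding flip_def by auto

lemma flip_ne: "flip i x \<noteq> x" unfolding flip_def by auto

lemma flip_inj: "inj_on (\<lambda>i. flip i y) A"
  unfolding inj_on_def flip_def by (auto split: if_splits)



definition lam :: "real \<Rightarrow> real" where "lam p = p / (1 - p)"
definition psi :: "real \<Rightarrow> nat \<Rightarrow> nat \<Rightarrow> real" where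
  "psi p k s = real k * exp (real s * ln (lam p) / real k)"
definition sc :: "real \<Rightarrow> nat \<Rightarrow> nat \<Rightarrow> nat set alg \<Rightarrow> nat set \<Rightarrow> real" where
  "sc p k r t x = measure_pmf.prob (run p (LR k r x) t) {T. dec k T = x}"
definition fl :: "real \<Rightarrow> nat \<Rightarrow> nat \<Rightarrow> nat set alg \<Rightarrow> nat set \<Rightarrow> real" where
  "fl p k r t x = measure_pmf.prob (run p (LR k r x) t) {T. dec k T \<noteq> x}"

lemma lam_bounds: "0 < p \<Longrightarrow> p < 1/2 \<Longrightarrow> 0 < lam p \<and> lam p < 1"
  unfolding lam_def by (auto simp: divide_less_eq)

lemma q_ratio:
  assumes "0 < p" "p < 1/2" "a \<in> {p, 1-p}" "b \<in> {p, 1-p}"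
  shows "lam p * a \<le> b"
proof -
  have l: "0 < lam p" "lam p < 1" using lam_bounds[OF assms(1,2)] by auto
  have h3: "lam p * (1 - p) = p" unfolding lam_def using assms by simp
  have h1: "lam p * p \<le> p" using l assms by simp
  have h2: "p \<le> 1 - p" using assms by simp
  have c1: "lam p * p \<le> p" "lam p * p \<le> 1 - p" "lam p * (1-p) \<le> p" "lam p * (1-p) \<le> 1 - p"
    using h1 h2 h3 by linarith+
  show ?thesis using assms(3,4) c1 by auto
qed

lemma amgm_exp:
  fixes a :: "nat \<Rightarrow> real"
  shows "real k * exp ((\<Sum>i<k. a i) / real k) \<le> (\<Sum>i<k. exp (a i))"
proof (cases "k = 0")
  case True then show ?thesis by simp
next
  case False
  define \<mu> where "\<mu> = (\<Sum>i<k. a i) / real k"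
  have "exp \<mu> * (1 + (a i - \<mu>)) \<le> exp (a i)" for i
  proof -
    have "exp \<mu> * (1 + (a i - \<mu>)) \<le> exp \<mu> * exp (a i - \<mu>)"
      by (intro mult_left_mono exp_ge_add_one_self) auto
    also have "\<dots> = exp (a i)" by (simp add: exp_diff)
    finally show ?thesis .
  qed
  then have "(\<Sum>i<k. exp \<mu> * (1 + (a i - \<mu>))) \<le> (\<Sum>i<k. exp (a i))" by (intro sum_mono)
  moreover have "(\<Sum>i<k. exp \<mu> * (1 + (a i - \<mu>))) = exp \<mu> * (real k + (\<Sum>i<k. a i) - real k * \<mu>)"
    by (simp add: sum_distrib_left[symmetric] sum.distrib sum_subtractf)
  moreover have "real k * \<mu> = (\<Sum>i<k. a i)" unfolding \<mu>_def using False by simp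
  ultimately show ?thesis unfolding \<mu>_def by (simp add: mult.commute)
qed

lemma psi_le:
  assumes "0 < p" "p < 1/2"
  shows "psi p k (\<Sum>i<k. n i) \<le> (\<Sum>i<k. lam p ^ n i)"
proof -
  have l: "0 < lam p" using lam_bounds[OF assms] by auto
  have "lam p ^ n i = exp (real (n i) * ln (lam p))" for i
    using l by (simp add: exp_of_nat_mult)
  moreover have "real (\<Sum>i<k. n i) * ln (lam p) = (\<Sum>i<k. real (n i) * ln (lam p))"
    by (simp add: sum_distrib_right)
  ultimately show ?thesis unfolding psi_def using amgm_exp[of k "\<lambda>i. real (n i) * ln (lam p)"] by simp
qed

lemma psi_mono:
  assumes "0 < p" "p < 1/2" "s \<le> s'"
  shows "psi p k s' \<le> psi p k s"
proof -
  have "ln (lam p) < 0" using lam_bounds[OF assms(1,2)] by simp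
  then have "real s' * ln (lam p) \<le> real s * ln (lam p)" using assms(3) by (intro mult_right_mono_neg) auto
  then have "real s' * ln (lam p) / real k \<le> real s * ln (lam p) / real k" by (intro divide_right_mono) auto
  then show ?thesis unfolding psi_def by (intro mult_left_mono) auto
qed

lemma psi_nonneg: "0 \<le> psi p k s" unfolding psi_def by simp

definition relw :: "real \<Rightarrow> nat \<Rightarrow> (nat set \<Rightarrow> real) \<Rightarrow> (nat \<Rightarrow> nat) \<Rightarrow> bool" where
  "relw p k w n \<longleftrightarrow> (\<forall>x\<in>Pow {..<k}. 0 \<le> w x \<and> (\<forall>i<k. lam p ^ n i * w x \<le> w (flip i x)))"

lemma relw_step:
  assumes "0 < p" "p < 1/2" "relw p k w n"
    and f0: "\<And>x. x \<in> Pow {..<k} \<Longrightarrow> 0 \<le> f x"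
    and fr: "\<And>x i. x \<in> Pow {..<k} \<Longrightarrow> i < k \<Longrightarrow> lam p ^ d i * f x \<le> f (flip i x)"
  shows "relw p k (\<lambda>x. w x * f x) (\<lambda>i. n i + d i)"
  unfolding relw_def
proof (intro ballI conjI allI impI)
  fix x assume x: "x \<in> Pow {..<k}"
  have l: "0 < lam p" using lam_bounds[OF assms(1,2)] by auto
  show "0 \<le> w x * f x" using assms(3) x f0 unfolding relw_def by auto
  fix i assume i: "i < k"
  have fx: "flip i x \<in> Pow {..<k}" using x i flip_in by auto
  have "lam p ^ (n i + d i) * (w x * f x) = (lam p ^ n i * w x) * (lam p ^ d i * f x)"
    by (simp add: power_add mult_ac)
  also have "\<dots> \<le> w (flip i x) * f (flip i x)"
    using assms(3) x i fx f0 fr l unfolding relw_def by (intro mult_mono) auto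
  finally show "lam p ^ (n i + d i) * (w x * f x) \<le> w (flip i x) * f (flip i x)" .
qed

lemma sum_split2:
  fixes w :: "nat set \<Rightarrow> real"
  shows "(\<Sum>x\<in>A. w x * (q x * a x + (1 - q x) * b x)) =
   (\<Sum>x\<in>A. (w x * q x) * a x) + (\<Sum>x\<in>A. (w x * (1 - q x)) * b x)"
  unfolding sum.distrib[symmetric] by (intro sum.cong refl) (simp add: algebra_simps)

lemma invariant:
  assumes "0 < p" "p < 1/2"
  shows "relw p k w n \<Longrightarrow> psi p k ((\<Sum>i<k. n i) + depth t) * (\<Sum>x\<in>Pow {..<k}. w x * sc p k r t x)
      \<le> (\<Sum>x\<in>Pow {..<k}. w x * fl p k r t x)"
proof (induction t arbitrary: w n)
  case (Output T)
  define y where "y = dec k T"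
  have y: "y \<in> Pow {..<k}" unfolding y_def dec_def by auto
  have w0: "\<And>x. x \<in> Pow {..<k} \<Longrightarrow> 0 \<le> w x" using Output unfolding relw_def by auto
  have wr: "\<And>i. i < k \<Longrightarrow> lam p ^ n i * w y \<le> w (flip i y)" using Output y unfolding relw_def by auto
  have "(\<Sum>x\<in>Pow {..<k}. w x * sc p k r (Output T) x) = (\<Sum>x\<in>Pow {..<k}. if x = y then w x else 0)"
    by (rule sum.cong) (auto simp: sc_def y_def indicator_def)
  also have "\<dots> = w y" using y by (simp add: sum.delta)
  finally have lhs: "(\<Sum>x\<in>Pow {..<k}. w x * sc p k r (Output T) x) = w y" .
  have "(\<Sum>x\<in>Pow {..<k}. w x * fl p k r (Output T) x) = (\<Sum>x\<in>Pow {..<k}. if x = y then 0 else w x)"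
    by (rule sum.cong) (auto simp: fl_def y_def indicator_def)
  also have "\<dots> = (\<Sum>x\<in>Pow {..<k} - {y}. w x)" by (simp add: sum.If_cases Diff_eq)
  also have "\<dots> \<ge> (\<Sum>x\<in>(\<lambda>i. flip i y) ` {..<k}. w x)"
    using flip_in y flip_ne w0 by (intro sum_mono2) auto
  also have "(\<Sum>x\<in>(\<lambda>i. flip i y) ` {..<k}. w x) = (\<Sum>i<k. w (flip i y))"
    by (subst sum.reindex) (auto simp: flip_inj)
  also have "(\<Sum>i<k. w (flip i y)) \<ge> (\<Sum>i<k. lam p ^ n i * w y)"
    using wr by (intro sum_mono) auto
  also have "(\<Sum>i<k. lam p ^ n i * w y) = (\<Sum>i<k. lam p ^ n i) * w y"
    by (simp add: sum_distrib_right)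
  finally have "(\<Sum>i<k. lam p ^ n i) * w y \<le> (\<Sum>x\<in>Pow {..<k}. w x * fl p k r (Output T) x)" .
  moreover have "psi p k (\<Sum>i<k. n i) * w y \<le> (\<Sum>i<k. lam p ^ n i) * w y"
    using psi_le[OF assms] w0[OF y] by (intro mult_right_mono) auto
  ultimately show ?case using lhs by simp
next
  case (Query e g)
  define q where "q = (\<lambda>x. if e \<in> LR k r x then 1 - p else p)"
  define d where "d = (\<lambda>i. if i = J e then 1 else (0::nat))"
  define n' where "n' = (\<lambda>i. n i + d i)"
  define S where "S = (\<Sum>i<k. n i)"
  define D where "D = depth (Query e g)"
  have q01: "0 \<le> q x" "q x \<le> 1" "q x \<in> {p, 1-p}" "1 - q x \<in> {p, 1-p}" for x
    using assms unfolding q_def by auto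
  have qf: "q (flip i x) = q x" if "x \<in> Pow {..<k}" "i \<noteq> J e" for i x
    unfolding q_def using flip_LR[of x k i e r] that by auto
  have r1: "relw p k (\<lambda>x. w x * q x) n'"
    unfolding n'_def
  proof (rule relw_step[OF assms Query.prems])
    fix x i assume "x \<in> Pow {..<k}" "i < k"
    then show "lam p ^ d i * q x \<le> q (flip i x)"
      using q_ratio[OF assms q01(3) q01(3)] qf unfolding d_def by (cases "i = J e") auto
  qed (use q01 in auto)
  have r0: "relw p k (\<lambda>x. w x * (1 - q x)) n'"
    unfolding n'_def
  proof (rule relw_step[OF assms Query.prems])
    fix x i assume "x \<in> Pow {..<k}" "i < k"
    then show "lam p ^ d i * (1 - q x) \<le> 1 - q (flip i x)"
      using q_ratio[OF assms q01(4) q01(4)] qf unfolding d_def by (cases "i = J e") auto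
  qed (use q01 in auto)
  have Sn': "(\<Sum>i<k. n' i) \<le> S + 1"
  proof -
    have "(\<Sum>i<k. n' i) = S + (\<Sum>i<k. d i)" unfolding n'_def S_def by (simp add: sum.distrib)
    moreover have "(\<Sum>i<k. d i) \<le> 1" unfolding d_def by (simp add: sum.delta)
    ultimately show ?thesis by simp
  qed
  have ps: "psi p k (S + D) \<le> psi p k ((\<Sum>i<k. n' i) + depth (g b))" for b
    using Sn' unfolding D_def by (intro psi_mono[OF assms]) (cases b; auto)
  have IH1: "psi p k ((\<Sum>i<k. n' i) + depth (g True)) * (\<Sum>x\<in>Pow {..<k}. (w x * q x) * sc p k r (g True) x)
      \<le> (\<Sum>x\<in>Pow {..<k}. (w x * q x) * fl p k r (g True) x)" using Query.IH r1 by blast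
  have IH0: "psi p k ((\<Sum>i<k. n' i) + depth (g False)) * (\<Sum>x\<in>Pow {..<k}. (w x * (1 - q x)) * sc p k r (g False) x)
      \<le> (\<Sum>x\<in>Pow {..<k}. (w x * (1 - q x)) * fl p k r (g False) x)" using Query.IH r0 by blast
  have w0: "\<And>x. x \<in> Pow {..<k} \<Longrightarrow> 0 \<le> w x" using Query.prems unfolding relw_def by auto
  have A1: "0 \<le> (\<Sum>x\<in>Pow {..<k}. (w x * q x) * sc p k r (g True) x)"
    using w0 q01 unfolding sc_def by (intro sum_nonneg mult_nonneg_nonneg) auto
  have A0: "0 \<le> (\<Sum>x\<in>Pow {..<k}. (w x * (1 - q x)) * sc p k r (g False) x)"
    using w0 q01 unfolding sc_def by (intro sum_nonneg mult_nonneg_nonneg) auto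
  have scQ: "sc p k r (Query e g) x = q x * sc p k r (g True) x + (1 - q x) * sc p k r (g False) x" for x
    unfolding sc_def q_def using q01[of x] unfolding q_def by (simp add: bern_prob)
  have flQ: "fl p k r (Query e g) x = q x * fl p k r (g True) x + (1 - q x) * fl p k r (g False) x" for x
    unfolding fl_def q_def using q01[of x] unfolding q_def by (simp add: bern_prob)
  have "psi p k (S + D) * (\<Sum>x\<in>Pow {..<k}. w x * sc p k r (Query e g) x)
      = psi p k (S + D) * (\<Sum>x\<in>Pow {..<k}. (w x * q x) * sc p k r (g True) x)
      + psi p k (S + D) * (\<Sum>x\<in>Pow {..<k}. (w x * (1 - q x)) * sc p k r (g False) x)"
    unfolding scQ sum_split2 by (simp add: distrib_left)
  also have "\<dots> \<le> psi p k ((\<Sum>i<k. n' i) + depth (g True)) * (\<Sum>x\<in>Pow {..<k}. (w x * q x) * sc p k r (g True) x)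
      + psi p k ((\<Sum>i<k. n' i) + depth (g False)) * (\<Sum>x\<in>Pow {..<k}. (w x * (1 - q x)) * sc p k r (g False) x)"
    using ps A1 A0 by (intro add_mono mult_right_mono) auto
  also have "\<dots> \<le> (\<Sum>x\<in>Pow {..<k}. (w x * q x) * fl p k r (g True) x) + (\<Sum>x\<in>Pow {..<k}. (w x * (1 - q x)) * fl p k r (g False) x)"
    using IH1 IH0 by (rule add_mono)
  also have "\<dots> = (\<Sum>x\<in>Pow {..<k}. w x * fl p k r (Query e g) x)"
    unfolding flQ sum_split2 ..
  finally show ?case unfolding S_def D_def .
next
  case (Coin c g)
  define c' where "c' = max 0 (min 1 c)"
  define S where "S = (\<Sum>i<k. n i)"
  define D where "D = depth (Coin c g)"
  have c01: "0 \<le> c'" "c' \<le> 1" unfolding c'_def by auto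
  have r1: "relw p k (\<lambda>x. w x * c') (\<lambda>i. n i + 0)"
    by (rule relw_step[OF assms Coin.prems]) (use c01 in auto)
  have r0: "relw p k (\<lambda>x. w x * (1 - c')) (\<lambda>i. n i + 0)"
    by (rule relw_step[OF assms Coin.prems]) (use c01 in auto)
  have ps: "psi p k (S + D) \<le> psi p k (S + depth (g b))" for b
    unfolding D_def by (intro psi_mono[OF assms]) (cases b; auto)
  have IH1: "psi p k (S + depth (g True)) * (\<Sum>x\<in>Pow {..<k}. (w x * c') * sc p k r (g True) x)
      \<le> (\<Sum>x\<in>Pow {..<k}. (w x * c') * fl p k r (g True) x)" using Coin.IH r1 unfolding S_def by simp
  have IH0: "psi p k (S + depth (g False)) * (\<Sum>x\<in>Pow {..<k}. (w x * (1 - c')) * sc p k r (g False) x)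
      \<le> (\<Sum>x\<in>Pow {..<k}. (w x * (1 - c')) * fl p k r (g False) x)" using Coin.IH r0 unfolding S_def by simp
  have w0: "\<And>x. x \<in> Pow {..<k} \<Longrightarrow> 0 \<le> w x" using Coin.prems unfolding relw_def by auto
  have A1: "0 \<le> (\<Sum>x\<in>Pow {..<k}. (w x * c') * sc p k r (g True) x)"
    using w0 c01 unfolding sc_def by (intro sum_nonneg mult_nonneg_nonneg) auto
  have A0: "0 \<le> (\<Sum>x\<in>Pow {..<k}. (w x * (1 - c')) * sc p k r (g False) x)"
    using w0 c01 unfolding sc_def by (intro sum_nonneg mult_nonneg_nonneg) auto
  have scQ: "sc p k r (Coin c g) x = c' * sc p k r (g True) x + (1 - c') * sc p k r (g False) x" for x
    unfolding sc_def c'_def by (simp add: coin_prob)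
  have flQ: "fl p k r (Coin c g) x = c' * fl p k r (g True) x + (1 - c') * fl p k r (g False) x" for x
    unfolding fl_def c'_def by (simp add: coin_prob)
  have "psi p k (S + D) * (\<Sum>x\<in>Pow {..<k}. w x * sc p k r (Coin c g) x)
      = psi p k (S + D) * (\<Sum>x\<in>Pow {..<k}. (w x * c') * sc p k r (g True) x)
      + psi p k (S + D) * (\<Sum>x\<in>Pow {..<k}. (w x * (1 - c')) * sc p k r (g False) x)"
    unfolding scQ sum_split2[where q="\<lambda>_. c'"] by (simp add: distrib_left)
  also have "\<dots> \<le> psi p k (S + depth (g True)) * (\<Sum>x\<in>Pow {..<k}. (w x * c') * sc p k r (g True) x)
      + psi p k (S + depth (g False)) * (\<Sum>x\<in>Pow {..<k}. (w x * (1 - c')) * sc p k r (g False) x)"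
    using ps A1 A0 by (intro add_mono mult_right_mono) auto
  also have "\<dots> \<le> (\<Sum>x\<in>Pow {..<k}. (w x * c') * fl p k r (g True) x) + (\<Sum>x\<in>Pow {..<k}. (w x * (1 - c')) * fl p k r (g False) x)"
    using IH1 IH0 by (rule add_mono)
  also have "\<dots> = (\<Sum>x\<in>Pow {..<k}. w x * fl p k r (Coin c g) x)"
    unfolding flQ sum_split2[where q="\<lambda>_. c'"] ..
  finally show ?case unfolding S_def D_def .
qed



lemma lower_core:
  assumes p: "0 < p" "p < 1/2" and e: "0 < \<epsilon>" "\<epsilon> < 1"
    and t: "\<forall>R. realizable (LV k r) (LE k r) R \<longrightarrow> fail_prob p (LV k r) (LE k r) R t \<le> \<epsilon>"
  shows "psi p k (depth t) * (1 - \<epsilon>) \<le> \<epsilon>"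
proof -
  have rel: "relw p k (\<lambda>_. 1) (\<lambda>_. 0)" unfolding relw_def by simp
  have inv: "psi p k (depth t) * (\<Sum>x\<in>Pow {..<k}. sc p k r t x) \<le> (\<Sum>x\<in>Pow {..<k}. fl p k r t x)"
    using invariant[OF p rel, of t r] by simp
  have fle: "fl p k r t x \<le> \<epsilon>" if x: "x \<in> Pow {..<k}" for x
  proof -
    have "fl p k r t x \<le> fail_prob p (LV k r) (LE k r) (LR k r x) t"
      unfolding fl_def fail_prob_def
      by (rule measure_pmf.finite_measure_mono) (use success_dec x in auto)
    also have "\<dots> \<le> \<epsilon>" using t realizable_LR x by blast
    finally show ?thesis .
  qed
  have sce: "sc p k r t x = 1 - fl p k r t x" for x
  proof -
    have eq: "{T. dec k T = x} = space (measure_pmf (run p (LR k r x) t)) - {T. dec k T \<noteq> x}" by auto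
    have "measure_pmf.prob (run p (LR k r x) t) (space (measure_pmf (run p (LR k r x) t)) - {T. dec k T \<noteq> x})
       = 1 - measure_pmf.prob (run p (LR k r x) t) {T. dec k T \<noteq> x}"
      by (rule measure_pmf.prob_compl) simp
    then show ?thesis unfolding sc_def fl_def eq .
  qed
  define N where "N = real (card (Pow {..<k::nat}))"
  have N: "0 < N" unfolding N_def by (simp add: card_Pow)
  have "N * (1 - \<epsilon>) \<le> (\<Sum>x\<in>Pow {..<k}. sc p k r t x)"
  proof -
    have "(\<Sum>x\<in>Pow {..<k}. 1 - \<epsilon>) \<le> (\<Sum>x\<in>Pow {..<k}. sc p k r t x)"
      using fle sce by (intro sum_mono) auto
    then show ?thesis unfolding N_def by (simp add: mult.commute)
  qed
  then have "psi p k (depth t) * (N * (1 - \<epsilon>)) \<le> psi p k (depth t) * (\<Sum>x\<in>Pow {..<k}. sc p k r t x)"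
    by (intro mult_left_mono psi_nonneg)
  also have "\<dots> \<le> (\<Sum>x\<in>Pow {..<k}. fl p k r t x)" by (rule inv)
  also have "\<dots> \<le> (\<Sum>x\<in>Pow {..<k}. \<epsilon>)" using fle by (intro sum_mono) auto
  also have "\<dots> = N * \<epsilon>" unfolding N_def by simp
  finally have "N * (psi p k (depth t) * (1 - \<epsilon>)) \<le> N * \<epsilon>" by (simp add: mult_ac)
  then show ?thesis using N by simp
qed

lemma lower_log:
  assumes p: "0 < p" "p < 1/2" and e: "0 < \<epsilon>" "\<epsilon> < 1" and k: "1 \<le> k"
    and h: "psi p k D * (1 - \<epsilon>) \<le> \<epsilon>"
  shows "real k * (ln (real k) - \<bar>ln \<epsilon> - ln (1 - \<epsilon>)\<bar>) \<le> real D * (- ln (lam p))"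
proof -
  define a where "a = real D * ln (lam p) / real k"
  have "ln (psi p k D * (1 - \<epsilon>)) \<le> ln \<epsilon>"
    using h e k by (subst ln_le_cancel_iff) (auto simp: psi_def intro!: mult_pos_pos)
  moreover have "ln (psi p k D * (1 - \<epsilon>)) = ln (real k) + a + ln (1 - \<epsilon>)"
    unfolding psi_def a_def[symmetric] using e k by (simp add: ln_mult)
  ultimately have "ln (real k) - \<bar>ln \<epsilon> - ln (1 - \<epsilon>)\<bar> \<le> - a" by linarith
  then have "real k * (ln (real k) - \<bar>ln \<epsilon> - ln (1 - \<epsilon>)\<bar>) \<le> real k * (- a)"
    by (intro mult_left_mono) auto
  also have "\<dots> = real D * (- ln (lam p))" unfolding a_def using k by simp
  finally show ?thesis .
qed

lemma lower_part:
  assumes p: "0 < p" "p < 1/2"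
  shows "\<forall>\<epsilon>::real. 0 < \<epsilon> \<and> \<epsilon> < 1 \<longrightarrow>
            (\<exists>c::real. c > 0 \<and> (\<exists>M::nat. \<forall>m\<ge>M. \<exists>V E.
               simple_graph V E \<and> card E = m \<and>
               (\<forall>t :: nat set alg.
                  (\<forall>R. realizable V E R \<longrightarrow> fail_prob p V E R t \<le> \<epsilon>) \<longrightarrow>
                  c * real m * ln (real m) \<le> real (depth t))))"
proof (intro allI impI)
  fix \<epsilon> :: real assume e: "0 < \<epsilon> \<and> \<epsilon> < 1"
  define ll where "ll = - ln (lam p)"
  have ll: "0 < ll" unfolding ll_def using lam_bounds[OF p] by simp
  define L where "L = \<bar>ln \<epsilon> - ln (1 - \<epsilon>)\<bar>"
  define M where "M = nat \<lceil>4 * exp (2 * L)\<rceil> + 16"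
  show "\<exists>c::real. c > 0 \<and> (\<exists>M::nat. \<forall>m\<ge>M. \<exists>V E.
               simple_graph V E \<and> card E = m \<and>
               (\<forall>t :: nat set alg.
                  (\<forall>R. realizable V E R \<longrightarrow> fail_prob p V E R t \<le> \<epsilon>) \<longrightarrow>
                  c * real m * ln (real m) \<le> real (depth t)))"
  proof (intro exI conjI allI impI)
    show "0 < 1 / (16 * ll)" using ll by simp
    fix m assume m: "M \<le> m"
    define k where "k = m div 3"
    define r where "r = m mod 3"
    show "simple_graph (LV k r) (LE k r)" by (rule simple_LE)
    show "card (LE k r) = m" unfolding card_LE k_def r_def by simp
    fix t assume t: "\<forall>R. realizable (LV k r) (LE k r) R \<longrightarrow> fail_prob p (LV k r) (LE k r) R t \<le> \<epsilon>"
    have m16: "16 \<le> m" using m unfolding M_def by simp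
    have mexp: "4 * exp (2 * L) \<le> real m" using m unfolding M_def by linarith
    have k4: "real m / 4 \<le> real k"
    proof -
      have "m \<le> 3 * k + 2" unfolding k_def by simp
      then have "real m \<le> 3 * real k + 2" by linarith
      then show ?thesis using m16 by linarith
    qed
    have k1: "1 \<le> k" using k4 m16 by linarith
    have main: "real k * (ln (real k) - L) \<le> real (depth t) * ll"
      using lower_log[OF p _ _ k1 lower_core[OF p _ _ t]] e unfolding L_def ll_def by auto
    have kexp: "exp (2 * L) \<le> real k" using mexp k4 by linarith
    have lk: "2 * L \<le> ln (real k)" using kexp k1 by (metis ln_exp ln_le_cancel_iff exp_gt_zero of_nat_0_less_iff less_le_trans zero_less_one le_eq_less_or_eq)
    have ksq: "real m \<le> real k * real k"
    proof -
      have "4 \<le> real k" using k4 m16 by linarith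
      then have "4 * real k \<le> real k * real k" by (intro mult_right_mono) auto
      then show ?thesis using k4 by linarith
    qed
    have lm: "ln (real m) \<le> 2 * ln (real k)"
    proof -
      have "ln (real m) \<le> ln (real k * real k)" using ksq m16 by (subst ln_le_cancel_iff) auto
      also have "\<dots> = 2 * ln (real k)" using k1 by (simp add: ln_mult)
      finally show ?thesis .
    qed
    have lm0: "0 \<le> ln (real m)" using m16 by simp
    have "real m * ln (real m) / 16 = (real m / 4) * (ln (real m) / 4)" by simp
    also have "\<dots> \<le> real k * (ln (real k) - L)"
      using k4 lm lk lm0 by (intro mult_mono) auto
    also have "\<dots> \<le> real (depth t) * ll" by (rule main)
    finally have "real m * ln (real m) / 16 \<le> real (depth t) * ll" .
    then show "1 / (16 * ll) * real m * ln (real m) \<le> real (depth t)"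
      using ll by (simp add: field_simps)
  qed
qed


theorem theorem2:
  fixes p :: real
  assumes "0 < p" and "p < 1/2"
  shows "(\<exists>(A :: nat set \<Rightarrow> nat set set \<Rightarrow> nat set alg) (C :: real) (\<delta> :: nat \<Rightarrow> real).
            \<delta> \<longlonglongrightarrow> 0 \<and>
            (\<forall>V E. simple_graph V E \<and> card E \<ge> 2 \<longrightarrow>
               real (depth (A V E)) \<le> C * real (card E) * ln (real (card E))) \<and>
            (\<forall>V E R. simple_graph V E \<and> realizable V E R \<longrightarrow>
               fail_prob p V E R (A V E) \<le> \<delta> (card E)))
       \<and> (\<forall>\<epsilon>::real. 0 < \<epsilon> \<and> \<epsilon> < 1 \<longrightarrow>
            (\<exists>c::real. c > 0 \<and> (\<exists>M::nat. \<forall>m\<ge>M. \<exists>V E.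
               simple_graph V E \<and> card E = m \<and>
               (\<forall>t :: nat set alg.
                  (\<forall>R. realizable V E R \<longrightarrow> fail_prob p V E R t \<le> \<epsilon>) \<longrightarrow>
                  c * real m * ln (real m) \<le> real (depth t)))))"
  using upper_part[OF assms] lower_part[OF assms] by blast

end
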